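(* Let $R$ be a $*$-ring with unity. Define a relation $\leq$ on $R$ by: $a\leq b$ if and only if there exists $x\in R$ such that $a=xa=xb=ax^*=bx^*$. Then $\leq$ is a partial order on $R$.
   Context: A $*$-ring is an associative ring with an involution $*$, i.e. a map satisfying $(a+b)^*=a^*+b^*$, $(ab)^*=b^*a^*$, $(a^* )^*=a$ for all $a,b$. *)

theory Defs
  imports Main
begin

definition is_involution :: "('a::ring_1 \<Rightarrow> 'a) \<Rightarrow> bool" where
  "is_involution s \<longleftrightarrow>
     (\<forall>a b. s (a + b) = s a + s b) \<and>
     (\<forall>a b. s (a * b) = s b * s a) \<and>
     (\<forall>a. s (s a) = a)"

definition star_le :: "('a::ring_1 \<Rightarrow> 'a) \<Rightarrow> 'a \<Rightarrow> 'a \<Rightarrow> bool" where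
  "star_le s a b \<longleftrightarrow>
     (\<exists>x. a = x * a \<and> a = x * b \<and> a = a * s x \<and> a = b * s x)"

end

theory Submission
  imports Defs
begin

theorem mainTheorem1:
  fixes s :: "'a::ring_1 \<Rightarrow> 'a"
  assumes "is_involution s"
  shows "partial_order_on UNIV {(a, b). star_le s a b}"
proof -
  have mul: "\<And>a b. s (a * b) = s b * s a" and inv: "\<And>a. s (s a) = a"
    using assms unfolding is_involution_def by auto
  have s1: "s 1 = 1"
  proof -
    have "s (s 1 * 1) = s 1 * s (s 1)" by (rule mul)
    thus ?thesis using inv by simp
  qed
  have refl: "\<And>a. star_le s a a"
    unfolding star_le_def by (rule exI[of _ 1]) (simp add: s1)
  have antis: "\<And>a b. star_le s a b \<Longrightarrow> star_le s b a \<Longrightarrow> a = b"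
  proof -
    fix a b assume "star_le s a b" "star_le s b a"
    then obtain x y where x: "a = x * a" "a = x * b" "a = a * s x" "a = b * s x"
      and y: "b = y * b" "b = y * a" "b = b * s y" "b = a * s y"
      unfolding star_le_def by blast
    have "b = a * s y" using y(4) .
    also have "\<dots> = x * (b * s y)" using x(2) by (simp add: mult.assoc)
    also have "\<dots> = x * b" using y(3) by simp
    finally show "a = b" using x by simp
  qed
  have trans: "\<And>a b c. star_le s a b \<Longrightarrow> star_le s b c \<Longrightarrow> star_le s a c"
  proof -
    fix a b c assume "star_le s a b" "star_le s b c"
    then obtain x y where x: "a = x * a" "a = x * b" "a = a * s x" "a = b * s x"
      and y: "b = y * b" "b = y * c" "b = b * s y" "b = c * s y"
      unfolding star_le_def by blast
    have ya: "y * a = a"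
    proof -
      have "y * a = y * b * s x" using x(4) by (simp add: mult.assoc)
      also have "\<dots> = b * s x" using y(1) by simp
      finally show ?thesis using x(4) by simp
    qed
    have ay: "a * s y = a"
    proof -
      have "a * s y = x * (b * s y)" using x(2) by (simp add: mult.assoc)
      also have "\<dots> = x * b" using y(3) by simp
      finally show ?thesis using x(2) by simp
    qed
    show "star_le s a c" unfolding star_le_def
    proof (rule exI[of _ "x * y"], intro conjI)
      show "a = x * y * a" using ya x(1) by (simp add: mult.assoc)
      show "a = x * y * c" using x(2) y(2) by (simp add: mult.assoc)
      show "a = a * s (x * y)" using ay x(3) by (simp add: mul mult.assoc[symmetric])
      show "a = c * s (x * y)" using x(4) y(4) by (simp add: mul mult.assoc)
    qed
  qed
  show ?thesis
    unfolding partial_order_on_def preorder_on_def refl_on_def trans_def antisym_def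
    using refl antis trans by auto
qed

end
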